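(* Assume $\Phi$ is deterministic with $\lambda_{\min}(G)>0$, $|c_i|=\hat c>0$ for all $i\in[m]$, and that $\sigma$ is Lipschitz, differentiable everywhere, and satisfies $|\sigma'(u)|\ge K_{\sigma'}>0$ for all $u\in\mathbb R$. Then every gradient-flow solution $(W^t)_{t\ge0}$ satisfies, for all $t\ge0$, $$\mathcal L^t\ \le\ \mathcal L^0\,e^{-2\hat c^2\lambda_{\min}(G)K_{\sigma'}^2\,t}.$$
   Context: Setup: training inputs $x_1,\dots,x_n\in\Omega\subseteq\mathbb R^d$ and targets $y\in\mathbb R^n$. An embedding $\Phi=(\phi_1,\dots,\phi_D):\Omega\to\mathbb R^D$. Activation $\sigma:\mathbb R\to\mathbb R$. Parameters $c\in\mathbb R^m$ (fixed, not trained) and $W\in\mathbb R^{m\times D}$. The model is $f(x)=\frac1m\sum_{i=1}^m c_i\,\sigma(h_i(x))$ with $h_i(x)=\frac{1}{\sqrt D}\sum_{j=1}^D W_{ij}\phi_j(x)$, and the loss is $\mathcal L=\frac12\sum_{a=1}^n (f(x_a)-y_a)^2$. Gram matrix $G_{ab}=\frac1D\Phi(x_a)^\top\Phi(x_b)$ with least eigenvalue $\lambda_{\min}(G)$. A gradient-flow solution is a map $t\mapsto W^t$, $t\ge0$, absolutely continuous on bounded intervals, such that for a.e. $t$ and all $i,j$: $\dot W^t_{ij}=-\frac{c_i}{\sqrt D}\sum_{a=1}^n (f^t(x_a)-y_a)\,\sigma'(h_i^t(x_a))\,\phi_j(x_a)$, where $h_i^t,f^t$ are computed from $W^t$ and $\mathcal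 L^t$ is the loss at time $t$. *)

theory Defs
  imports "HOL-Analysis.Analysis"
begin

text \<open>Index types: 'n training points, 'm neurons, 'D embedding features, 'd input dimension.\<close>

definition nn_h :: "('x \<Rightarrow> real^'D) \<Rightarrow> real^'D^'m \<Rightarrow> 'm \<Rightarrow> 'x \<Rightarrow> real" where
  "nn_h Phi W i x = (1 / sqrt (real CARD('D))) * (\<Sum>j\<in>UNIV. W$i$j * Phi x $ j)"

definition nn_f :: "(real \<Rightarrow> real) \<Rightarrow> ('x \<Rightarrow> real^'D) \<Rightarrow> real^'m \<Rightarrow> real^'D^'m \<Rightarrow> 'x \<Rightarrow> real" where
  "nn_f \<sigma> Phi c W x = (1 / real CARD('m)) * (\<Sum>i\<in>UNIV. c$i * \<sigma> (nn_h Phi W i x))"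

definition nn_loss :: "(real \<Rightarrow> real) \<Rightarrow> ('x \<Rightarrow> real^'D) \<Rightarrow> real^'m \<Rightarrow> ('n \<Rightarrow> 'x) \<Rightarrow> real^'n
    \<Rightarrow> real^'D^'m \<Rightarrow> real" where
  "nn_loss \<sigma> Phi c xs y W = (1/2) * (\<Sum>a\<in>UNIV. (nn_f \<sigma> Phi c W (xs a) - y$a)^2)"

definition gram :: "('x \<Rightarrow> real^'D) \<Rightarrow> ('n \<Rightarrow> 'x) \<Rightarrow> real^'n^'n" where
  "gram Phi xs = (\<chi> a b. (1 / real CARD('D)) * (Phi (xs a) \<bullet> Phi (xs b)))"

definition is_eigenvalue :: "real^'n^'n \<Rightarrow> real \<Rightarrow> bool" where
  "is_eigenvalue A \<mu> \<longleftrightarrow> (\<exists>v. v \<noteq> 0 \<and> A *v v = \<mu> *\<^sub>R v)"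

definition lambda_min :: "real^'n^'n \<Rightarrow> real" where
  "lambda_min A = Min {\<mu>. is_eigenvalue A \<mu>}"

definition abs_cont_on :: "real \<Rightarrow> real \<Rightarrow> (real \<Rightarrow> 'a::real_normed_vector) \<Rightarrow> bool" where
  "abs_cont_on s e f \<longleftrightarrow>
     (\<forall>\<epsilon>>0. \<exists>\<delta>>0. \<forall>(N::nat) (l::nat \<Rightarrow> real) (r::nat \<Rightarrow> real).
        (\<forall>k<N. s \<le> l k \<and> l k \<le> r k \<and> r k \<le> e) \<and>
        (\<forall>k<N. \<forall>k'<N. k \<noteq> k' \<longrightarrow> r k \<le> l k' \<or> r k' \<le> l k) \<and>
        (\<Sum>k<N. r k - l k) < \<delta>
        \<longrightarrow> (\<Sum>k<N. norm (f (r k) - f (l k))) < \<epsilon>)"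

definition gf_rhs :: "(real \<Rightarrow> real) \<Rightarrow> ('x \<Rightarrow> real^'D) \<Rightarrow> real^'m \<Rightarrow> ('n \<Rightarrow> 'x) \<Rightarrow> real^'n
    \<Rightarrow> real^'D^'m \<Rightarrow> real^'D^'m" where
  "gf_rhs \<sigma> Phi c xs y W = (\<chi> i j. - (c$i / sqrt (real CARD('D))) *
      (\<Sum>a\<in>UNIV. (nn_f \<sigma> Phi c W (xs a) - y$a) * deriv \<sigma> (nn_h Phi W i (xs a)) * Phi (xs a) $ j))"

definition gradient_flow_solution :: "(real \<Rightarrow> real) \<Rightarrow> ('x \<Rightarrow> real^'D) \<Rightarrow> real^'m \<Rightarrow> ('n \<Rightarrow> 'x)
    \<Rightarrow> real^'n \<Rightarrow> (real \<Rightarrow> real^'D^'m) \<Rightarrow> bool" where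
  "gradient_flow_solution \<sigma> Phi c xs y W \<longleftrightarrow>
     (\<forall>T\<ge>0. abs_cont_on 0 T W) \<and>
     (AE t in lborel. t \<ge> 0 \<longrightarrow> (W has_vector_derivative gf_rhs \<sigma> Phi c xs y (W t)) (at t))"

end

theory Submission
  imports Defs
begin

lemma ac_nonincr:
  fixes g :: "real \<Rightarrow> real"
  assumes ac: "abs_cont_on a b g" and ab: "a \<le> b" and N: "negligible N"
    and der: "\<And>t. t \<in> {a..b} \<Longrightarrow> t \<notin> N \<Longrightarrow> \<exists>D. (g has_real_derivative D) (at t) \<and> D \<le> 0"
  shows "g b \<le> g a"
proof -
  have key: "g b - g a \<le> e * (b - a) + e" if e: "e > 0" for e
  proof -
    obtain \<delta> where \<delta>: "\<delta>>0" and acd: "\<And>(M::nat) l r. (\<forall>k<M. a \<le> l k \<and> l k \<le> r k \<and> r k \<le> b) \<Longrightarrow>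
        (\<forall>k<M. \<forall>k'<M. k\<noteq>k' \<longrightarrow> r k \<le> l k' \<or> r k' \<le> l k) \<Longrightarrow> (\<Sum>k<M. r k - l k) < \<delta> \<Longrightarrow>
        (\<Sum>k<M. norm (g (r k) - g (l k))) < e"
    proof -
      obtain \<delta> where "\<delta>>0" and H: "\<forall>(M::nat) (l::nat \<Rightarrow> real) (r::nat \<Rightarrow> real).
        (\<forall>k<M. a \<le> l k \<and> l k \<le> r k \<and> r k \<le> b) \<and>
        (\<forall>k<M. \<forall>k'<M. k \<noteq> k' \<longrightarrow> r k \<le> l k' \<or> r k' \<le> l k) \<and>
        (\<Sum>k<M. r k - l k) < \<delta>
        \<longrightarrow> (\<Sum>k<M. norm (g (r k) - g (l k))) < e"
        using ac e unfolding abs_cont_on_def by blast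
      show ?thesis by (rule that[OF \<open>\<delta>>0\<close>]) (use H in blast)
    qed
    have "N \<in> sets lebesgue" using N by (simp add: negligible_iff_null_sets null_sets.sets_into_space null_setsD2)
    then obtain U where U: "open U" "N \<subseteq> U" "(U - N) \<in> lmeasurable" "emeasure lebesgue (U - N) < ennreal \<delta>"
      using sets_lebesgue_outer_open \<delta> by metis
    have NL: "N \<in> lmeasurable" "measure lebesgue N = 0" using N
      by (auto simp: negligible_iff_null_sets fmeasurable_def measure_def)
    have UU: "U = (U - N) \<union> N" using U by auto
    have Ulm: "U \<in> lmeasurable" using U(3) NL by (subst UU) (rule fmeasurable.Un)
    have "measure lebesgue U \<le> measure lebesgue (U - N) + measure lebesgue N"
      by (subst UU) (rule measure_Un_le; use U NL in \<open>auto simp: fmeasurable_def\<close>)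
    moreover have "measure lebesgue (U - N) < \<delta>"
      using U(3,4) \<delta> by (simp add: emeasure_eq_measure2 ennreal_less_iff)
    ultimately have mU: "measure lebesgue U < \<delta>" using NL by linarith
    have ex: "\<exists>r>0. (t \<in> N \<longrightarrow> ball t r \<subseteq> U) \<and>
       (t \<in> {a..b} \<and> t \<notin> N \<longrightarrow> (\<forall>u. \<bar>u - t\<bar> < r \<longrightarrow> (t \<le> u \<longrightarrow> g u - g t \<le> e * (u - t)) \<and> (u \<le> t \<longrightarrow> g t - g u \<le> e * (t - u))))" for t
    proof (cases "t \<in> N")
      case True
      then obtain r where "r > 0" "ball t r \<subseteq> U" using U(1,2) open_contains_ball by blast
      then show ?thesis using True by blast
    next
      case False
      show ?thesis
      proof (cases "t \<in> {a..b}")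
        case True
        then obtain D where D: "(g has_real_derivative D) (at t)" "D \<le> 0" using der False by blast
        then have "(g has_derivative (*) D) (at t within UNIV)" by (simp add: has_field_derivative_def)
        then obtain d where d: "d > 0" "\<And>y. norm (y - t) < d \<Longrightarrow> norm (g y - g t - D * (y - t)) \<le> e * norm (y - t)"
          unfolding has_derivative_within_alt using e by blast
        have "(\<forall>u. \<bar>u - t\<bar> < d \<longrightarrow> (t \<le> u \<longrightarrow> g u - g t \<le> e * (u - t)) \<and> (u \<le> t \<longrightarrow> g t - g u \<le> e * (t - u)))"
        proof (intro allI impI conjI)
          fix u assume u: "\<bar>u - t\<bar> < d"
          have h: "\<bar>g u - g t - D * (u - t)\<bar> \<le> e * \<bar>u - t\<bar>" using d(2)[of u] u by simp
          { assume "t \<le> u" then show "g u - g t \<le> e * (u - t)" using h D(2)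
              by (smt (verit, ccfv_threshold) mult_nonpos_nonneg) }
          { assume "u \<le> t" then show "g t - g u \<le> e * (t - u)" using h D(2)
              by (smt (verit, ccfv_threshold) mult_nonpos_nonpos) }
        qed
        then show ?thesis using d(1) False by blast
      next
        case False
        then show ?thesis using \<open>t \<notin> N\<close> by (intro exI[of _ 1]) auto
      qed
    qed
    then obtain R where R: "\<And>t. R t > 0" "\<And>t. t \<in> N \<Longrightarrow> ball t (R t) \<subseteq> U"
      "\<And>t u. t \<in> {a..b} \<Longrightarrow> t \<notin> N \<Longrightarrow> \<bar>u - t\<bar> < R t \<Longrightarrow> t \<le> u \<Longrightarrow> g u - g t \<le> e * (u - t)"
      "\<And>t u. t \<in> {a..b} \<Longrightarrow> t \<notin> N \<Longrightarrow> \<bar>u - t\<bar> < R t \<Longrightarrow> u \<le> t \<Longrightarrow> g t - g u \<le> e * (t - u)"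
      by metis
    have "gauge (\<lambda>t. ball t (R t))" using R(1) by (intro gauge_ball_dependent) auto
    then obtain p where p: "p tagged_division_of {a..b}" "(\<lambda>t. ball t (R t)) fine p"
      using fine_division_exists[of _ a b] by (metis cbox_interval)
    have fin: "finite p" using p(1) by blast
    have Kform: "\<exists>u v. K = {u..v} \<and> u \<le> v \<and> Inf K = u \<and> Sup K = v \<and> x \<in> K \<and> K \<subseteq> {a..b} \<and> K \<subseteq> ball x (R x)"
      if xKp: "(x,K) \<in> p" for x K
    proof -
      obtain u v where K: "K = cbox u v" using tagged_division_ofD(4)[OF p(1) xKp] by blast
      have xK: "x \<in> K" using tagged_division_ofD(2)[OF p(1) xKp] .
      then have uv: "u \<le> v" using K by auto
      show ?thesis using K xK uv tagged_division_ofD(3)[OF p(1) xKp] fineD[OF p(2) xKp]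
        by (intro exI[of _ u] exI[of _ v]) auto
    qed
    have Kform2: "K = {Inf K..Sup K}" "Inf K \<le> Sup K" "x \<in> K" "K \<subseteq> {a..b}" "K \<subseteq> ball x (R x)"
       "a \<le> Inf K" "Sup K \<le> b"
      if xKp: "(x,K) \<in> p" for x K
    proof -
      obtain u v where "K = {u..v}" "u \<le> v" "Inf K = u" "Sup K = v" "x \<in> K" "K \<subseteq> {a..b}" "K \<subseteq> ball x (R x)"
        using Kform[OF xKp] by blast
      moreover have "u \<in> K" "v \<in> K" using calculation by auto
      ultimately show "K = {Inf K..Sup K}" "Inf K \<le> Sup K" "x \<in> K" "K \<subseteq> {a..b}" "K \<subseteq> ball x (R x)"
       "a \<le> Inf K" "Sup K \<le> b" by auto
    qed
    define p1 where "p1 = {(x,K)\<in>p. x \<notin> N}"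
    define p2 where "p2 = {(x,K)\<in>p. x \<in> N}"
    have split: "p = p1 \<union> p2" "p1 \<inter> p2 = {}" unfolding p1_def p2_def by auto
    have "g b - g a = (\<Sum>(x,K)\<in>p. g (Sup K) - g (Inf K))"
      using additive_tagged_division_1[OF ab p(1), of g] by simp
    also have "\<dots> = (\<Sum>(x,K)\<in>p1. g (Sup K) - g (Inf K)) + (\<Sum>(x,K)\<in>p2. g (Sup K) - g (Inf K))"
      using split fin by (metis (no_types, lifting) finite_Un sum.union_disjoint)
    also have "(\<Sum>(x,K)\<in>p1. g (Sup K) - g (Inf K)) \<le> (\<Sum>(x,K)\<in>p1. e * (Sup K - Inf K))"
    proof (rule sum_mono, clarify)
      fix x K assume "(x,K) \<in> p1"
      then have xK: "(x,K) \<in> p" "x \<notin> N" unfolding p1_def by auto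
      obtain u v where uv: "K = {u..v}" "u \<le> v" "Inf K = u" "Sup K = v" "x \<in> K" "K \<subseteq> {a..b}" "K \<subseteq> ball x (R x)"
        using Kform[OF xK(1)] by blast
      have xab: "x \<in> {a..b}" using uv by auto
      have "u \<in> ball x (R x)" "v \<in> ball x (R x)" using uv by (auto simp del: mem_ball intro!: subsetD[OF uv(7)])
      then have "\<bar>u - x\<bar> < R x" "\<bar>v - x\<bar> < R x" by (auto simp: dist_real_def)
      then have "g v - g x \<le> e * (v - x)" "g x - g u \<le> e * (x - u)"
        using R(3)[OF xab xK(2)] R(4)[OF xab xK(2)] uv by auto
      then show "g (Sup K) - g (Inf K) \<le> e * (Sup K - Inf K)" using uv by (simp add: algebra_simps)
    qed
    also have "(\<Sum>(x,K)\<in>p1. e * (Sup K - Inf K)) \<le> (\<Sum>(x,K)\<in>p. e * (Sup K - Inf K))"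
    proof (rule sum_mono2[OF fin])
      show "p1 \<subseteq> p" unfolding p1_def by auto
      show "0 \<le> (case b of (x, K) \<Rightarrow> e * (Sup K - Inf K))" if "b \<in> p - p1" for b
      proof (cases b)
        case (Pair x K)
        then have "Inf K \<le> Sup K" using that Kform2(2)[of x K] by auto
        then show ?thesis using Pair e by simp
      qed
    qed
    also have "\<dots> = e * (b - a)"
      using additive_tagged_division_1[OF ab p(1), of "\<lambda>x. x"]
      by (simp add: sum_distrib_left[symmetric] case_prod_unfold)
    finally have s1: "g b - g a \<le> e * (b - a) + (\<Sum>(x,K)\<in>p2. g (Sup K) - g (Inf K))" by linarith
    define q where "q = {(x,K)\<in>p2. Inf K < Sup K}"
    have qp: "q \<subseteq> p" unfolding q_def p2_def by auto
    have finq: "finite q" using qp fin finite_subset by blast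
    have "(\<Sum>(x,K)\<in>p2. g (Sup K) - g (Inf K)) = (\<Sum>(x,K)\<in>q. g (Sup K) - g (Inf K))"
    proof (rule sum.mono_neutral_right)
      show "finite p2" using fin unfolding p2_def by (rule rev_finite_subset) auto
      show "q \<subseteq> p2" unfolding q_def by auto
      show "\<forall>i\<in>p2 - q. (case i of (x, K) \<Rightarrow> g (Sup K) - g (Inf K)) = 0"
      proof clarify
        fix x K assume "(x,K) \<in> p2" "(x,K) \<notin> q"
        then have "(x,K) \<in> p" "\<not> Inf K < Sup K" unfolding q_def p2_def by auto
        then show "g (Sup K) - g (Inf K) = 0" using Kform2(2)[of x K] by simp
      qed
    qed
    also have "\<dots> \<le> (\<Sum>(x,K)\<in>q. norm (g (Sup K) - g (Inf K)))"
      by (rule sum_mono) auto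
    also have "\<dots> < e"
    proof -
      obtain h where h: "bij_betw h {0..<card q} q" using ex_bij_betw_nat_finite[OF finq] by blast
      define M where "M = card q"
      define l where "l k = Inf (snd (h k))" for k
      define r where "r k = Sup (snd (h k))" for k
      have hq: "h k \<in> q" if "k < M" for k using h that unfolding M_def bij_betw_def by auto
      have c1: "\<forall>k<M. a \<le> l k \<and> l k \<le> r k \<and> r k \<le> b"
      proof (intro allI impI)
        fix k assume "k < M"
        then have "h k \<in> p" using hq qp by auto
        then show "a \<le> l k \<and> l k \<le> r k \<and> r k \<le> b" unfolding l_def r_def
          using Kform2[of "fst (h k)" "snd (h k)"] by auto
      qed
      have c2: "\<forall>k<M. \<forall>k'<M. k\<noteq>k' \<longrightarrow> r k \<le> l k' \<or> r k' \<le> l k"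
      proof (intro allI impI)
        fix k k' assume kk: "k < M" "k' < M" "k \<noteq> k'"
        then have neq: "h k \<noteq> h k'" using h unfolding M_def bij_betw_def inj_on_def by auto
        have in1: "h k \<in> q" "h k' \<in> q" using hq kk by auto
        obtain x K where xK: "h k = (x,K)" by (cases "h k")
        obtain x' K' where xK': "h k' = (x',K')" by (cases "h k'")
        have P: "(x,K) \<in> p" "(x',K') \<in> p" "Inf K < Sup K" "Inf K' < Sup K'"
          using in1 xK xK' qp unfolding q_def by auto
        have disj: "interior K \<inter> interior K' = {}"
          using tagged_division_ofD(5)[OF p(1) P(1,2)] neq xK xK' by auto
        obtain u v where uv: "K = {u..v}" "Inf K = u" "Sup K = v" using Kform[OF P(1)] by blast
        obtain u' v' where uv': "K' = {u'..v'}" "Inf K' = u'" "Sup K' = v'" using Kform[OF P(2)] by blast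
        have "v \<le> u' \<or> v' \<le> u"
        proof (rule ccontr)
          assume "\<not> (v \<le> u' \<or> v' \<le> u)"
          then have "u < v'" "u' < v" by auto
          moreover have "u < v" "u' < v'" using uv uv' P(3,4) by auto
          ultimately have "u < (max u u' + min v v') / 2" "(max u u' + min v v') / 2 < v"
            "u' < (max u u' + min v v') / 2" "(max u u' + min v v') / 2 < v'"
            by (simp_all add: max_def min_def)
          then have "(max u u' + min v v') / 2 \<in> interior K \<inter> interior K'"
            using uv uv' by simp
          then show False using disj by blast
        qed
        then show "r k \<le> l k' \<or> r k' \<le> l k" unfolding r_def l_def using xK xK' uv uv' by auto
      qed
      have sumeq: "(\<Sum>k<M. f (h k)) = (\<Sum>z\<in>q. f z)" for f :: "real \<times> real set \<Rightarrow> real"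
        using sum.reindex_bij_betw[OF h, of f] unfolding M_def by (simp add: lessThan_atLeast0)
      have lmq: "snd z \<in> lmeasurable" if "z \<in> q" for z
      proof -
        have eq: "snd z = {Inf (snd z)..Sup (snd z)}" using that qp Kform2(1)[of "fst z" "snd z"] by auto
        have "{Inf (snd z)..Sup (snd z)} \<in> lmeasurable"
          using lmeasurable_cbox[of "Inf (snd z)" "Sup (snd z)"] by (simp only: cbox_interval)
        then show ?thesis by (metis eq)
      qed
      have "(\<Sum>k<M. r k - l k) = (\<Sum>(x,K)\<in>q. Sup K - Inf K)"
        using sumeq[of "\<lambda>(x,K). Sup K - Inf K"] unfolding r_def l_def by (simp add: case_prod_unfold)
      also have "\<dots> = (\<Sum>z\<in>q. measure lebesgue (snd z))"
      proof (rule sum.cong[OF refl], clarify)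
        fix x K assume "(x,K) \<in> q"
        then obtain u v where "K = {u..v}" "Inf K = u" "Sup K = v" "u \<le> v" using Kform qp by blast
        then show "Sup K - Inf K = measure lebesgue (snd (x,K))" by simp
      qed
      also have "\<dots> = measure lebesgue (\<Union>(snd ` q))"
      proof (rule measure_negligible_finite_Union_image[symmetric, OF finq])
        show "snd z \<in> lmeasurable" if "z \<in> q" for z using lmq[OF that] .
        show "pairwise (\<lambda>z z'. negligible (snd z \<inter> snd z')) q"
        proof (rule pairwiseI)
          fix z z' assume zz: "z \<in> q" "z' \<in> q" "z \<noteq> z'"
          obtain x K where xK: "z = (x,K)" by (cases z)
          obtain x' K' where xK': "z' = (x',K')" by (cases z')
          have P: "(x,K) \<in> p" "(x',K') \<in> p" using zz qp xK xK' by auto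
          have disj: "interior K \<inter> interior K' = {}"
            using tagged_division_ofD(5)[OF p(1) P] zz xK xK' by auto
          obtain u v where uv: "K = {u..v}" using Kform[OF P(1)] by blast
          obtain u' v' where uv': "K' = {u'..v'}" using Kform[OF P(2)] by blast
          have "K \<inter> K' \<subseteq> {u,v,u',v'}"
          proof
            fix w assume w: "w \<in> K \<inter> K'"
            show "w \<in> {u,v,u',v'}"
            proof (rule ccontr)
              assume "w \<notin> {u,v,u',v'}"
              then have "w \<in> interior K \<inter> interior K'" using w uv uv' by auto
              then show False using disj by blast
            qed
          qed
          then have "negligible (K \<inter> K')"
            by (rule negligible_subset[OF negligible_finite, rotated]) simp
          then show "negligible (snd z \<inter> snd z')" using xK xK' by simp
        qed
      qed
      also have "\<dots> \<le> measure lebesgue U"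
      proof (rule measure_mono_fmeasurable[OF _ _ Ulm])
        show "\<Union>(snd ` q) \<subseteq> U"
        proof clarify
          fix x K w assume "(x,K) \<in> q" "w \<in> snd (x,K)"
          then have "(x,K) \<in> p" "x \<in> N" "w \<in> K" using q_def p2_def by auto
          then show "w \<in> U" using Kform2(5)[of x K] R(2)[of x] by auto
        qed
        have "\<And>z. z \<in> q \<Longrightarrow> snd z \<in> sets lebesgue" using lmq fmeasurableD by blast
        then show "\<Union>(snd ` q) \<in> sets lebesgue" using finq by (intro sets.finite_UN) auto
      qed
      finally have "(\<Sum>k<M. r k - l k) < \<delta>" using mU by linarith
      then have "(\<Sum>k<M. norm (g (r k) - g (l k))) < e" by (rule acd[OF c1 c2])
      moreover have "(\<Sum>k<M. norm (g (r k) - g (l k))) = (\<Sum>(x,K)\<in>q. norm (g (Sup K) - g (Inf K)))"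
        using sumeq[of "\<lambda>(x,K). norm (g (Sup K) - g (Inf K))"] unfolding r_def l_def by (simp add: case_prod_unfold)
      ultimately show ?thesis by simp
    qed
    finally show ?thesis using s1 by linarith
  qed
  show ?thesis
  proof (rule ccontr)
    assume "\<not> g b \<le> g a"
    have pos: "b - a + 1 > 0" using ab by simp
    define e where "e = ((g b - g a) / 2) / (b - a + 1)"
    have e: "e > 0" using \<open>\<not> g b \<le> g a\<close> pos unfolding e_def by auto
    have "e * (b - a) + e = e * (b - a + 1)" by (simp add: algebra_simps)
    also have "\<dots> = (g b - g a) / 2" unfolding e_def using pos by (metis less_irrefl nonzero_eq_divide_eq)
    finally have "e * (b - a) + e = (g b - g a) / 2" .
    then have "g b - g a \<le> (g b - g a) / 2" using key[OF e] by simp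
    then show False using \<open>\<not> g b \<le> g a\<close> by simp
  qed
qed

lemma ac_cont:
  assumes "abs_cont_on a b f"
  shows "continuous_on {a..b} f"
  unfolding continuous_on_iff
proof (intro ballI allI impI)
  fix x e :: real assume x: "x \<in> {a..b}" and e: "e > 0"
  obtain d where d: "d > 0" and H: "\<forall>(N::nat) (l::nat \<Rightarrow> real) (r::nat \<Rightarrow> real).
        (\<forall>k<N. a \<le> l k \<and> l k \<le> r k \<and> r k \<le> b) \<and>
        (\<forall>k<N. \<forall>k'<N. k \<noteq> k' \<longrightarrow> r k \<le> l k' \<or> r k' \<le> l k) \<and>
        (\<Sum>k<N. r k - l k) < d
        \<longrightarrow> (\<Sum>k<N. norm (f (r k) - f (l k))) < e"
    using assms e unfolding abs_cont_on_def by blast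
  show "\<exists>d>0. \<forall>x'\<in>{a..b}. dist x' x < d \<longrightarrow> dist (f x') (f x) < e"
  proof (intro exI[of _ d] conjI ballI impI)
    fix x' assume x': "x' \<in> {a..b}" "dist x' x < d"
    have "(\<Sum>k<Suc 0. norm (f ((\<lambda>_. max x x') k) - f ((\<lambda>_. min x x') k))) < e"
      using H[rule_format, of "Suc 0" "\<lambda>_. min x x'" "\<lambda>_. max x x'"] x x'
      by (cases "x \<le> x'") (auto simp: dist_real_def max_def min_def)
    then show "dist (f x') (f x) < e"
      by (cases "x \<le> x'") (auto simp: dist_norm norm_minus_commute max_def min_def)
  qed (use d in auto)
qed

lemma ac_lip:
  fixes f :: "real \<Rightarrow> 'a::real_normed_vector" and \<phi> :: "'a \<Rightarrow> 'b::real_normed_vector"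
  assumes ac: "abs_cont_on a b f" and M: "M \<ge> 0"
    and lip: "\<And>x y. x \<in> {a..b} \<Longrightarrow> y \<in> {a..b} \<Longrightarrow> norm (\<phi> (f x) - \<phi> (f y)) \<le> M * norm (f x - f y)"
  shows "abs_cont_on a b (\<lambda>t. \<phi> (f t))"
  unfolding abs_cont_on_def
proof (intro allI impI)
  fix e :: real assume e: "e > 0"
  then have e': "e / (M + 1) > 0" using M by simp
  obtain d where d: "d > 0" and H: "\<forall>(N::nat) (l::nat \<Rightarrow> real) (r::nat \<Rightarrow> real).
        (\<forall>k<N. a \<le> l k \<and> l k \<le> r k \<and> r k \<le> b) \<and>
        (\<forall>k<N. \<forall>k'<N. k \<noteq> k' \<longrightarrow> r k \<le> l k' \<or> r k' \<le> l k) \<and>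
        (\<Sum>k<N. r k - l k) < d
        \<longrightarrow> (\<Sum>k<N. norm (f (r k) - f (l k))) < e / (M + 1)"
    using ac e' unfolding abs_cont_on_def by blast
  show "\<exists>d>0. \<forall>(N::nat) (l::nat \<Rightarrow> real) (r::nat \<Rightarrow> real).
        (\<forall>k<N. a \<le> l k \<and> l k \<le> r k \<and> r k \<le> b) \<and>
        (\<forall>k<N. \<forall>k'<N. k \<noteq> k' \<longrightarrow> r k \<le> l k' \<or> r k' \<le> l k) \<and>
        (\<Sum>k<N. r k - l k) < d
        \<longrightarrow> (\<Sum>k<N. norm (\<phi> (f (r k)) - \<phi> (f (l k)))) < e"
  proof (intro exI[of _ d] conjI allI impI, fact d)
    fix N :: nat and l r :: "nat \<Rightarrow> real"
    assume A: "(\<forall>k<N. a \<le> l k \<and> l k \<le> r k \<and> r k \<le> b) \<and>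
        (\<forall>k<N. \<forall>k'<N. k \<noteq> k' \<longrightarrow> r k \<le> l k' \<or> r k' \<le> l k) \<and> (\<Sum>k<N. r k - l k) < d"
    have S: "(\<Sum>k<N. norm (f (r k) - f (l k))) < e / (M + 1)" using H A by blast
    have "(\<Sum>k<N. norm (\<phi> (f (r k)) - \<phi> (f (l k)))) \<le> (\<Sum>k<N. M * norm (f (r k) - f (l k)))"
      by (rule sum_mono) (use A lip in auto)
    also have "\<dots> \<le> (M + 1) * (\<Sum>k<N. norm (f (r k) - f (l k)))"
      by (simp add: sum_distrib_left[symmetric] mult_right_mono sum_nonneg)
    also have "\<dots> < (M + 1) * (e / (M + 1))" using S M by (intro mult_strict_left_mono) auto
    also have "\<dots> = e" using M by simp
    finally show "(\<Sum>k<N. norm (\<phi> (f (r k)) - \<phi> (f (l k)))) < e" .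
  qed
qed

lemma ac_add:
  fixes f g :: "real \<Rightarrow> 'a::real_normed_vector"
  assumes f: "abs_cont_on a b f" and g: "abs_cont_on a b g"
  shows "abs_cont_on a b (\<lambda>t. f t + g t)"
  unfolding abs_cont_on_def
proof (intro allI impI)
  fix e :: real assume e: "e > 0"
  then have e': "e / 2 > 0" by simp
  obtain d1 where d1: "d1 > 0" and H1: "\<forall>(N::nat) (l::nat \<Rightarrow> real) (r::nat \<Rightarrow> real).
        (\<forall>k<N. a \<le> l k \<and> l k \<le> r k \<and> r k \<le> b) \<and>
        (\<forall>k<N. \<forall>k'<N. k \<noteq> k' \<longrightarrow> r k \<le> l k' \<or> r k' \<le> l k) \<and>
        (\<Sum>k<N. r k - l k) < d1
        \<longrightarrow> (\<Sum>k<N. norm (f (r k) - f (l k))) < e / 2"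
    using f e' unfolding abs_cont_on_def by blast
  obtain d2 where d2: "d2 > 0" and H2: "\<forall>(N::nat) (l::nat \<Rightarrow> real) (r::nat \<Rightarrow> real).
        (\<forall>k<N. a \<le> l k \<and> l k \<le> r k \<and> r k \<le> b) \<and>
        (\<forall>k<N. \<forall>k'<N. k \<noteq> k' \<longrightarrow> r k \<le> l k' \<or> r k' \<le> l k) \<and>
        (\<Sum>k<N. r k - l k) < d2
        \<longrightarrow> (\<Sum>k<N. norm (g (r k) - g (l k))) < e / 2"
    using g e' unfolding abs_cont_on_def by blast
  show "\<exists>d>0. \<forall>(N::nat) (l::nat \<Rightarrow> real) (r::nat \<Rightarrow> real).
        (\<forall>k<N. a \<le> l k \<and> l k \<le> r k \<and> r k \<le> b) \<and>
        (\<forall>k<N. \<forall>k'<N. k \<noteq> k' \<longrightarrow> r k \<le> l k' \<or> r k' \<le> l k) \<and>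
        (\<Sum>k<N. r k - l k) < d
        \<longrightarrow> (\<Sum>k<N. norm ((f (r k) + g (r k)) - (f (l k) + g (l k)))) < e"
  proof (intro exI[of _ "min d1 d2"] conjI allI impI)
    show "min d1 d2 > 0" using d1 d2 by simp
    fix N :: nat and l r :: "nat \<Rightarrow> real"
    assume A: "(\<forall>k<N. a \<le> l k \<and> l k \<le> r k \<and> r k \<le> b) \<and>
        (\<forall>k<N. \<forall>k'<N. k \<noteq> k' \<longrightarrow> r k \<le> l k' \<or> r k' \<le> l k) \<and> (\<Sum>k<N. r k - l k) < min d1 d2"
    have S1: "(\<Sum>k<N. norm (f (r k) - f (l k))) < e / 2" using H1 A by auto
    have S2: "(\<Sum>k<N. norm (g (r k) - g (l k))) < e / 2" using H2 A by auto
    have "(\<Sum>k<N. norm ((f (r k) + g (r k)) - (f (l k) + g (l k))))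
        \<le> (\<Sum>k<N. norm (f (r k) - f (l k)) + norm (g (r k) - g (l k)))"
      by (rule sum_mono) (metis add_diff_add norm_triangle_ineq)
    also have "\<dots> < e" using S1 S2 by (simp add: sum.distrib)
    finally show "(\<Sum>k<N. norm ((f (r k) + g (r k)) - (f (l k) + g (l k)))) < e" .
  qed
qed

lemma ac_const: "abs_cont_on a b (\<lambda>t. k)"
  unfolding abs_cont_on_def by auto

lemma ac_id: "abs_cont_on a b (\<lambda>t::real. t)"
  unfolding abs_cont_on_def
proof (intro allI impI)
  fix e :: real assume e: "e > 0"
  show "\<exists>d>0. \<forall>(N::nat) (l::nat \<Rightarrow> real) (r::nat \<Rightarrow> real).
        (\<forall>k<N. a \<le> l k \<and> l k \<le> r k \<and> r k \<le> b) \<and>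
        (\<forall>k<N. \<forall>k'<N. k \<noteq> k' \<longrightarrow> r k \<le> l k' \<or> r k' \<le> l k) \<and>
        (\<Sum>k<N. r k - l k) < d
        \<longrightarrow> (\<Sum>k<N. norm (r k - l k)) < e"
  proof (intro exI[of _ e] conjI allI impI, fact e)
    fix N :: nat and l r :: "nat \<Rightarrow> real"
    assume A: "(\<forall>k<N. a \<le> l k \<and> l k \<le> r k \<and> r k \<le> b) \<and>
        (\<forall>k<N. \<forall>k'<N. k \<noteq> k' \<longrightarrow> r k \<le> l k' \<or> r k' \<le> l k) \<and> (\<Sum>k<N. r k - l k) < e"
    have "(\<Sum>k<N. norm (r k - l k)) = (\<Sum>k<N. r k - l k)"
      by (rule sum.cong) (use A in auto)
    then show "(\<Sum>k<N. norm (r k - l k)) < e" using A by simp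
  qed
qed

lemma ac_sum:
  fixes f :: "'i \<Rightarrow> real \<Rightarrow> 'a::real_normed_vector"
  assumes "finite I" "\<And>i. i \<in> I \<Longrightarrow> abs_cont_on a b (f i)"
  shows "abs_cont_on a b (\<lambda>t. \<Sum>i\<in>I. f i t)"
  using assms
proof (induction I rule: finite_induct)
  case empty
  then show ?case using ac_const[of a b 0] by simp
next
  case (insert x F)
  then show ?case using ac_add[of a b "f x" "\<lambda>t. \<Sum>i\<in>F. f i t"] by simp
qed

lemma ac_cmul:
  fixes f :: "real \<Rightarrow> real"
  assumes "abs_cont_on a b f"
  shows "abs_cont_on a b (\<lambda>t. k * f t)"
  using ac_lip[OF assms, of "\<bar>k\<bar>" "\<lambda>x. k * x"] by (simp add: abs_mult right_diff_distrib[symmetric])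

lemma ac_bounded:
  fixes f :: "real \<Rightarrow> real"
  assumes "abs_cont_on a b f"
  obtains B where "B > 0" "\<And>t. t \<in> {a..b} \<Longrightarrow> \<bar>f t\<bar> \<le> B"
proof -
  have "compact (f ` {a..b})" using ac_cont[OF assms] compact_continuous_image by blast
  then have "bounded (f ` {a..b})" by (rule compact_imp_bounded)
  then obtain B where "B > 0" "\<forall>x\<in>f ` {a..b}. norm x \<le> B" using bounded_pos by blast
  then show ?thesis using that by auto
qed

lemma ac_mult:
  fixes f g :: "real \<Rightarrow> real"
  assumes f: "abs_cont_on a b f" and g: "abs_cont_on a b g"
  shows "abs_cont_on a b (\<lambda>t. f t * g t)"
proof -
  obtain B1 where B1: "B1 > 0" "\<And>t. t \<in> {a..b} \<Longrightarrow> \<bar>f t\<bar> \<le> B1" using ac_bounded[OF f] by blast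
  obtain B2 where B2: "B2 > 0" "\<And>t. t \<in> {a..b} \<Longrightarrow> \<bar>g t\<bar> \<le> B2" using ac_bounded[OF g] by blast
  define B where "B = B1 + B2"
  have fB: "\<And>t. t \<in> {a..b} \<Longrightarrow> \<bar>f t\<bar> \<le> B" and gB: "\<And>t. t \<in> {a..b} \<Longrightarrow> \<bar>g t\<bar> \<le> B"
    using B1 B2 unfolding B_def by (smt (verit))+
  have Bp: "B > 0" using B1 B2 unfolding B_def by simp
  define F where "F t = (f t, g t)" for t
  have acF: "abs_cont_on a b F"
  proof -
    have 1: "abs_cont_on a b (\<lambda>t. (f t, 0::real))"
      using ac_lip[OF f, of 1 "\<lambda>x. (x, 0::real)"] by simp
    have 2: "abs_cont_on a b (\<lambda>t. (0::real, g t))"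
      using ac_lip[OF g, of 1 "\<lambda>x. (0::real, x)"] by simp
    show ?thesis using ac_add[OF 1 2] unfolding F_def by simp
  qed
  have "abs_cont_on a b (\<lambda>t. (\<lambda>p. fst p * snd p) (F t))"
  proof (rule ac_lip[OF acF, of "2 * B"])
    show "0 \<le> 2 * B" using Bp by simp
    fix x y assume xy: "x \<in> {a..b}" "y \<in> {a..b}"
    have "\<bar>f x * g x - f y * g y\<bar> = \<bar>f x * (g x - g y) + g y * (f x - f y)\<bar>" by (simp add: algebra_simps)
    also have "\<dots> \<le> \<bar>f x\<bar> * \<bar>g x - g y\<bar> + \<bar>g y\<bar> * \<bar>f x - f y\<bar>" by (simp add: abs_mult abs_triangle_ineq[THEN order_trans])
    also have "\<dots> \<le> B * \<bar>g x - g y\<bar> + B * \<bar>f x - f y\<bar>"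
      using fB[OF xy(1)] gB[OF xy(2)] by (intro add_mono mult_right_mono) auto
    also have "\<dots> \<le> 2 * B * norm (F x - F y)"
    proof -
      have "\<bar>g x - g y\<bar> \<le> norm (F x - F y)" "\<bar>f x - f y\<bar> \<le> norm (F x - F y)"
        unfolding F_def by (simp_all add: norm_Pair real_sqrt_ge_abs1 real_sqrt_ge_abs2 norm_prod_def)
      then have "B * \<bar>g x - g y\<bar> \<le> B * norm (F x - F y)" "B * \<bar>f x - f y\<bar> \<le> B * norm (F x - F y)"
        using Bp by (simp_all add: mult_left_mono)
      then show ?thesis by linarith
    qed
    finally show "norm ((\<lambda>p. fst p * snd p) (F x) - (\<lambda>p. fst p * snd p) (F y)) \<le> 2 * B * norm (F x - F y)"
      unfolding F_def by simp
  qed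
  then show ?thesis unfolding F_def by simp
qed

lemma comp_deriv:
  fixes W :: "real \<Rightarrow> real^'D^'m"
  assumes "(W has_vector_derivative V) (at t)"
  shows "((\<lambda>s. W s $ i $ j) has_real_derivative V $ i $ j) (at t)"
proof -
  have "((\<lambda>s. W s $ i) has_vector_derivative V $ i) (at t)"
    using bounded_linear.has_vector_derivative[OF bounded_linear_vec_nth assms] .
  then have "((\<lambda>s. W s $ i $ j) has_vector_derivative V $ i $ j) (at t)"
    using bounded_linear.has_vector_derivative[OF bounded_linear_vec_nth] by blast
  then show ?thesis by (simp add: has_real_derivative_iff_has_vector_derivative)
qed

lemma loss_deriv:
  fixes W :: "real \<Rightarrow> real^'D::finite^'m::finite" and xs :: "'n::finite \<Rightarrow> 'x"
  assumes Wd: "(W has_vector_derivative V) (at t)" and sd: "\<forall>u. \<sigma> differentiable (at u)"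
  shows "((\<lambda>s. nn_loss \<sigma> Phi c xs y (W s)) has_real_derivative
     (\<Sum>a\<in>UNIV. (nn_f \<sigma> Phi c (W t) (xs a) - y$a) * ((1 / real CARD('m)) *
        (\<Sum>i\<in>UNIV. c$i * (deriv \<sigma> (nn_h Phi (W t) i (xs a)) *
           ((1 / sqrt (real CARD('D))) * (\<Sum>j\<in>UNIV. V$i$j * Phi (xs a) $ j))))))) (at t)"
proof -
  have sd': "(\<sigma> has_real_derivative deriv \<sigma> u) (at u)" for u
    using sd by (simp add: DERIV_deriv_iff_real_differentiable)
  have hd: "((\<lambda>s. nn_h Phi (W s) i (xs a)) has_real_derivative
      (1 / sqrt (real CARD('D))) * (\<Sum>j\<in>UNIV. V$i$j * Phi (xs a) $ j)) (at t)" for i a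
    unfolding nn_h_def
    by (intro DERIV_cmult DERIV_sum DERIV_cmult_right comp_deriv[OF Wd])
  have sg: "((\<lambda>s. \<sigma> (nn_h Phi (W s) i (xs a))) has_real_derivative
      deriv \<sigma> (nn_h Phi (W t) i (xs a)) * ((1 / sqrt (real CARD('D))) * (\<Sum>j\<in>UNIV. V$i$j * Phi (xs a) $ j))) (at t)" for i a
    by (rule DERIV_chain'[OF hd sd'])
  have fd: "((\<lambda>s. nn_f \<sigma> Phi c (W s) (xs a)) has_real_derivative
      (1 / real CARD('m)) * (\<Sum>i\<in>UNIV. c$i * (deriv \<sigma> (nn_h Phi (W t) i (xs a)) *
           ((1 / sqrt (real CARD('D))) * (\<Sum>j\<in>UNIV. V$i$j * Phi (xs a) $ j))))) (at t)" for a
    unfolding nn_f_def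
    by (intro DERIV_cmult DERIV_sum sg)
  have sq: "((\<lambda>s. (nn_f \<sigma> Phi c (W s) (xs a) - y$a)^2) has_real_derivative
      2 * ((nn_f \<sigma> Phi c (W t) (xs a) - y$a) * ((1 / real CARD('m)) * (\<Sum>i\<in>UNIV. c$i * (deriv \<sigma> (nn_h Phi (W t) i (xs a)) *
           ((1 / sqrt (real CARD('D))) * (\<Sum>j\<in>UNIV. V$i$j * Phi (xs a) $ j))))))) (at t)" for a
  proof -
    have "((\<lambda>s. nn_f \<sigma> Phi c (W s) (xs a) - y$a) has_real_derivative
      (1 / real CARD('m)) * (\<Sum>i\<in>UNIV. c$i * (deriv \<sigma> (nn_h Phi (W t) i (xs a)) *
           ((1 / sqrt (real CARD('D))) * (\<Sum>j\<in>UNIV. V$i$j * Phi (xs a) $ j)))) - 0) (at t)"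
      by (intro DERIV_diff fd DERIV_const)
    from DERIV_power[OF this, of 2] show ?thesis by (simp add: algebra_simps)
  qed
  show ?thesis unfolding nn_loss_def
    apply (rule DERIV_cong[OF DERIV_cmult[OF DERIV_sum[OF sq]]])
    by (simp add: sum_distrib_left)
qed

lemma sym_mv:
  fixes G :: "real^'n^'n"
  assumes "transpose G = G"
  shows "(G *v v) \<bullet> w = v \<bullet> (G *v w)"
proof -
  have "G *v v = v v* G" by (metis assms transpose_matrix_vector)
  then show ?thesis by (simp add: dot_lmul_matrix)
qed

lemma eig_finite:
  fixes G :: "real^'n^'n"
  assumes sym: "transpose G = G"
  shows "finite {\<mu>. is_eigenvalue G \<mu>}"
proof -
  define S where "S = {\<mu>. is_eigenvalue G \<mu>}"
  define ev where "ev \<mu> = (SOME v. v \<noteq> 0 \<and> G *v v = \<mu> *\<^sub>R v)" for \<mu>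
  have ev: "ev \<mu> \<noteq> 0" "G *v ev \<mu> = \<mu> *\<^sub>R ev \<mu>" if "\<mu> \<in> S" for \<mu>
  proof -
    have "\<exists>v. v \<noteq> 0 \<and> G *v v = \<mu> *\<^sub>R v" using that unfolding S_def is_eigenvalue_def by auto
    then have "ev \<mu> \<noteq> 0 \<and> G *v ev \<mu> = \<mu> *\<^sub>R ev \<mu>" unfolding ev_def by (rule someI_ex)
    then show "ev \<mu> \<noteq> 0" "G *v ev \<mu> = \<mu> *\<^sub>R ev \<mu>" by auto
  qed
  have inj: "inj_on ev S"
  proof (rule inj_onI)
    fix \<mu> \<nu> assume h: "\<mu> \<in> S" "\<nu> \<in> S" "ev \<mu> = ev \<nu>"
    then have "\<mu> *\<^sub>R ev \<mu> = \<nu> *\<^sub>R ev \<mu>" using ev by metis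
    then have "(\<mu> - \<nu>) *\<^sub>R ev \<mu> = 0" by (simp add: algebra_simps)
    then show "\<mu> = \<nu>" using ev(1)[OF h(1)] by simp
  qed
  have orth: "pairwise orthogonal (ev ` S)"
  proof (rule pairwiseI, clarify)
    fix \<mu> \<nu> assume h: "\<mu> \<in> S" "\<nu> \<in> S" "ev \<mu> \<noteq> ev \<nu>"
    then have ne: "\<mu> \<noteq> \<nu>" by auto
    have "\<mu> * (ev \<mu> \<bullet> ev \<nu>) = (G *v ev \<mu>) \<bullet> ev \<nu>" using ev(2)[OF h(1)] by simp
    also have "\<dots> = ev \<mu> \<bullet> (G *v ev \<nu>)" by (rule sym_mv[OF sym])
    also have "\<dots> = \<nu> * (ev \<mu> \<bullet> ev \<nu>)" using ev(2)[OF h(2)] by simp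
    finally have "(\<mu> - \<nu>) * (ev \<mu> \<bullet> ev \<nu>) = 0" by (simp add: algebra_simps)
    then show "orthogonal (ev \<mu>) (ev \<nu>)" using ne by (simp add: orthogonal_def)
  qed
  have "0 \<notin> ev ` S" using ev(1) by auto
  then have "independent (ev ` S)" using pairwise_orthogonal_independent orth by blast
  then have "finite (ev ` S)" by (rule independent_imp_finite)
  then show ?thesis using inj finite_imageD unfolding S_def by blast
qed

lemma quad_lower:
  fixes G :: "real^'n^'n"
  assumes sym: "transpose G = G"
  shows "v \<bullet> (G *v v) \<ge> lambda_min G * (v \<bullet> v)"
proof -
  define q where "q w = w \<bullet> (G *v w)" for w :: "real^'n"
  have cont: "continuous_on (sphere 0 1) q" unfolding q_def
    by (intro continuous_intros bounded_linear.continuous_on[OF matrix_vector_mul_bounded_linear])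
  have ne: "sphere (0::real^'n) 1 \<noteq> {}" by simp
  obtain v0 where v0: "v0 \<in> sphere 0 1" "\<And>w. w \<in> sphere 0 1 \<Longrightarrow> q v0 \<le> q w"
    using continuous_attains_inf[OF compact_sphere ne cont] by blast
  define \<mu> where "\<mu> = q v0"
  have qscale: "q (c *\<^sub>R w) = c^2 * q w" for c w
    unfolding q_def by (simp add: matrix_vector_mult_scaleR power2_eq_square)
  have Qnn: "q w - \<mu> * (w \<bullet> w) \<ge> 0" for w
  proof (cases "w = 0")
    case True then show ?thesis by (simp add: q_def)
  next
    case False
    then have n: "norm w > 0" by simp
    have "(1 / norm w) *\<^sub>R w \<in> sphere 0 1" using n by (simp add: norm_scaleR)
    then have "\<mu> \<le> q ((1 / norm w) *\<^sub>R w)" using v0 unfolding \<mu>_def by blast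
    also have "\<dots> = q w / (norm w)^2" by (simp add: qscale power_divide)
    finally have "\<mu> * (norm w)^2 \<le> q w" using n by (simp add: pos_le_divide_eq)
    then show ?thesis by (simp add: power2_norm_eq_inner)
  qed
  have v0n: "v0 \<bullet> v0 = 1" using v0(1) by (simp add: power2_norm_eq_inner[symmetric])
  define u where "u = G *v v0 - \<mu> *\<^sub>R v0"
  have expand: "q (v0 + s *\<^sub>R u) - \<mu> * ((v0 + s *\<^sub>R u) \<bullet> (v0 + s *\<^sub>R u))
      = (q v0 - \<mu> * (v0 \<bullet> v0)) + 2 * s * (u \<bullet> u) + s^2 * (q u - \<mu> * (u \<bullet> u))" for s
  proof -
    have sm: "v0 \<bullet> (G *v u) = (G *v v0) \<bullet> u" using sym_mv[OF sym, of v0 u] by simp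
    show ?thesis unfolding q_def u_def
      using sm unfolding u_def
      by (simp add: algebra_simps inner_add_left inner_add_right power2_eq_square inner_commute)
  qed
  have z: "q v0 - \<mu> * (v0 \<bullet> v0) = 0" using v0n unfolding \<mu>_def by simp
  define d where "d = q u - \<mu> * (u \<bullet> u)"
  have d: "d \<ge> 0" unfolding d_def by (rule Qnn)
  define c where "c = u \<bullet> u"
  have "0 \<le> 2 * s * c + s^2 * d" for s using Qnn[of "v0 + s *\<^sub>R u"] expand[of s] z
    unfolding c_def d_def by simp
  note H = this
  define t where "t = d + 1"
  have t: "t > 0" using d unfolding t_def by simp
  have idt: "(2 * (- c / t) * c + (- c / t)^2 * d) * t^2 = c^2 * (d - 2 * t)"
    using t by (simp add: field_simps power2_eq_square)
  have "0 \<le> (2 * (- c / t) * c + (- c / t)^2 * d) * t^2" using H[of "- c / t"] by simp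
  then have "c^2 * (d - 2 * (d+1)) \<ge> 0" using idt unfolding t_def by simp
  moreover have "d - 2 * (d+1) < 0" using d by simp
  ultimately have "c^2 \<le> 0"
    by (metis linorder_not_le mult_pos_neg zero_less_power2 less_eq_real_def)
  then have "c = 0" by simp
  then have "u = 0" unfolding c_def by simp
  then have eig: "is_eigenvalue G \<mu>" unfolding is_eigenvalue_def u_def using v0n
    by (intro exI[of _ v0]) auto
  have "lambda_min G \<le> \<mu>" unfolding lambda_min_def using eig eig_finite[OF sym] by (simp add: Min_le)
  then have "lambda_min G * (v \<bullet> v) \<le> \<mu> * (v \<bullet> v)" by (simp add: mult_right_mono)
  also have "\<dots> \<le> q v" using Qnn[of v] by simp
  finally show ?thesis unfolding q_def .
qed

lemma swap_inner:
  fixes X :: "'n::finite \<Rightarrow> real" and P :: "'n \<Rightarrow> 'D::finite \<Rightarrow> real"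
  shows "(\<Sum>j\<in>UNIV. (\<Sum>b\<in>UNIV. X b * P b j) * P a j) = (\<Sum>b\<in>UNIV. X b * (\<Sum>j\<in>UNIV. P a j * P b j))"
proof -
  have "(\<Sum>j\<in>UNIV. (\<Sum>b\<in>UNIV. X b * P b j) * P a j) = (\<Sum>j\<in>UNIV. \<Sum>b\<in>UNIV. X b * P b j * P a j)"
    by (simp add: sum_distrib_right)
  also have "\<dots> = (\<Sum>b\<in>UNIV. \<Sum>j\<in>UNIV. X b * P b j * P a j)" by (rule sum.swap)
  also have "\<dots> = (\<Sum>b\<in>UNIV. X b * (\<Sum>j\<in>UNIV. P a j * P b j))"
    by (simp add: sum_distrib_left mult_ac)
  finally show ?thesis .
qed

lemma deriv_bound:
  fixes W0 :: "real^'D::finite^'m::finite" and xs :: "'n::finite \<Rightarrow> 'x" and Phi :: "'x \<Rightarrow> real^'D"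
    and y :: "real^'n" and c :: "real^'m" and \<sigma> :: "real \<Rightarrow> real" and chat K :: real
  assumes lam: "lambda_min (gram Phi xs) > 0"
    and ch: "chat > 0" "\<forall>i. \<bar>c$i\<bar> = chat"
    and K: "K > 0" "\<forall>u. \<bar>deriv \<sigma> u\<bar> \<ge> K"
  defines "V \<equiv> gf_rhs \<sigma> Phi c xs y W0"
  shows "(\<Sum>a\<in>UNIV. (nn_f \<sigma> Phi c W0 (xs a) - y$a) * ((1 / real CARD('m)) *
        (\<Sum>i\<in>UNIV. c$i * (deriv \<sigma> (nn_h Phi W0 i (xs a)) *
           ((1 / sqrt (real CARD('D))) * (\<Sum>j\<in>UNIV. V$i$j * Phi (xs a) $ j))))))
      \<le> - 2 * chat^2 * lambda_min (gram Phi xs) * K^2 * nn_loss \<sigma> Phi c xs y W0"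
proof -
  define r where "r a = nn_f \<sigma> Phi c W0 (xs a) - y$a" for a
  define sp where "sp i a = deriv \<sigma> (nn_h Phi W0 i (xs a))" for i a
  define P where "P a j = Phi (xs a) $ j" for a j
  define D where "D = real CARD('D)"
  define m where "m = real CARD('m)"
  define G where "G = gram Phi xs"
  define lm where "lm = lambda_min G"
  define v where "v i = (\<chi> a. r a * sp i a)" for i
  have Dp: "D > 0" unfolding D_def by simp
  have mp: "m > 0" unfolding m_def by simp
  have sD: "sqrt D * sqrt D = D" using Dp by simp
  have Vij: "V$i$j = - (c$i / sqrt D) * (\<Sum>b\<in>UNIV. r b * sp i b * P b j)" for i j
    unfolding V_def gf_rhs_def r_def sp_def P_def D_def by simp
  have Gab: "G$a$b = (1 / D) * (\<Sum>j\<in>UNIV. P a j * P b j)" for a b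
    unfolding G_def gram_def D_def P_def inner_vec_def by simp
  have qform: "v i \<bullet> (G *v v i) = (1 / D) * (\<Sum>a\<in>UNIV. \<Sum>b\<in>UNIV. (r a * sp i a) * (\<Sum>j\<in>UNIV. P a j * P b j) * (r b * sp i b))" for i
    unfolding inner_vec_def matrix_vector_mult_def v_def Gab
    by (simp add: sum_distrib_left sum_distrib_right mult_ac)
  have peri: "(\<Sum>a\<in>UNIV. r a * (c$i * (sp i a * ((1 / sqrt D) * (\<Sum>j\<in>UNIV. V$i$j * P a j)))))
      = - ((c$i)^2) * (v i \<bullet> (G *v v i))" for i
  proof -
    have "(\<Sum>a\<in>UNIV. r a * (c$i * (sp i a * ((1 / sqrt D) * (\<Sum>j\<in>UNIV. V$i$j * P a j)))))
       = (\<Sum>a\<in>UNIV. r a * (c$i * (sp i a * ((1 / sqrt D) * (- (c$i / sqrt D)) *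
            (\<Sum>j\<in>UNIV. (\<Sum>b\<in>UNIV. (r b * sp i b) * P b j) * P a j)))))"
      unfolding Vij by (simp add: sum_distrib_left sum_distrib_right mult_ac)
    also have "\<dots> = (\<Sum>a\<in>UNIV. r a * (c$i * (sp i a * (- (c$i / D)) *
            (\<Sum>b\<in>UNIV. (r b * sp i b) * (\<Sum>j\<in>UNIV. P a j * P b j)))))"
    proof -
      have sw: "(\<Sum>j\<in>UNIV. (\<Sum>b\<in>UNIV. (r b * sp i b) * P b j) * P a j) = (\<Sum>b\<in>UNIV. (r b * sp i b) * (\<Sum>j\<in>UNIV. P a j * P b j))" for a
        by (rule swap_inner)
      have c: "(1 / sqrt D) * (- (c$i / sqrt D)) = - (c$i / D)" using sD by (simp add: field_simps)
      show ?thesis unfolding sw by (simp only: c mult.assoc[symmetric])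
    qed
    also have "\<dots> = - ((c$i)^2) * ((1 / D) * (\<Sum>a\<in>UNIV. \<Sum>b\<in>UNIV. (r a * sp i a) * (\<Sum>j\<in>UNIV. P a j * P b j) * (r b * sp i b)))"
      by (simp add: sum_distrib_left sum_distrib_right mult_ac power2_eq_square)
    finally show ?thesis unfolding qform .
  qed
  have lhs: "(\<Sum>a\<in>UNIV. r a * ((1 / m) * (\<Sum>i\<in>UNIV. c$i * (sp i a * ((1 / sqrt D) * (\<Sum>j\<in>UNIV. V$i$j * P a j))))))
     = (1 / m) * (\<Sum>i\<in>UNIV. - ((c$i)^2) * (v i \<bullet> (G *v v i)))"
  proof -
    have "(\<Sum>a\<in>UNIV. r a * ((1 / m) * (\<Sum>i\<in>UNIV. c$i * (sp i a * ((1 / sqrt D) * (\<Sum>j\<in>UNIV. V$i$j * P a j))))))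
       = (1 / m) * (\<Sum>a\<in>UNIV. \<Sum>i\<in>UNIV. r a * (c$i * (sp i a * ((1 / sqrt D) * (\<Sum>j\<in>UNIV. V$i$j * P a j)))))"
      by (simp add: sum_distrib_left mult_ac)
    also have "\<dots> = (1 / m) * (\<Sum>i\<in>UNIV. \<Sum>a\<in>UNIV. r a * (c$i * (sp i a * ((1 / sqrt D) * (\<Sum>j\<in>UNIV. V$i$j * P a j)))))"
      by (subst sum.swap) (rule refl)
    also have "\<dots> = (1 / m) * (\<Sum>i\<in>UNIV. - ((c$i)^2) * (v i \<bullet> (G *v v i)))"
      by (rule arg_cong[where f="\<lambda>x. (1 / m) * x"], rule sum.cong[OF refl], rule peri)
    finally show ?thesis .
  qed
  have symG: "transpose G = G"
    unfolding G_def gram_def transpose_def by (simp add: inner_commute)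
  have loss: "nn_loss \<sigma> Phi c xs y W0 = (1/2) * (\<Sum>a\<in>UNIV. (r a)^2)"
    unfolding nn_loss_def r_def by simp
  have vv: "v i \<bullet> v i \<ge> K^2 * (\<Sum>a\<in>UNIV. (r a)^2)" for i
  proof -
    have "K^2 * (\<Sum>a\<in>UNIV. (r a)^2) = (\<Sum>a\<in>UNIV. (r a)^2 * K^2)" by (simp add: sum_distrib_left mult_ac)
    also have "\<dots> \<le> (\<Sum>a\<in>UNIV. (r a)^2 * (sp i a)^2)"
    proof (rule sum_mono)
      fix a
      have "K^2 \<le> (sp i a)^2" using K unfolding sp_def
        by (metis abs_le_square_iff abs_of_pos)
      then show "(r a)^2 * K^2 \<le> (r a)^2 * (sp i a)^2" by (simp add: mult_left_mono)
    qed
    also have "\<dots> = v i \<bullet> v i" unfolding v_def inner_vec_def by (simp add: power2_eq_square mult_ac)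
    finally show ?thesis .
  qed
  have lmp: "lm > 0" using lam unfolding lm_def G_def .
  have qi: "(c$i)^2 * (v i \<bullet> (G *v v i)) \<ge> chat^2 * (lm * (K^2 * (\<Sum>a\<in>UNIV. (r a)^2)))" for i
  proof -
    have "v i \<bullet> (G *v v i) \<ge> lm * (v i \<bullet> v i)" using quad_lower[OF symG] unfolding lm_def by blast
    moreover have "lm * (v i \<bullet> v i) \<ge> lm * (K^2 * (\<Sum>a\<in>UNIV. (r a)^2))" using vv[of i] lmp by (simp add: mult_left_mono)
    moreover have "(c$i)^2 = chat^2" using ch by (metis power2_abs)
    ultimately show ?thesis by (simp add: mult_left_mono)
  qed
  have "(\<Sum>i\<in>UNIV. (c$i)^2 * (v i \<bullet> (G *v v i))) \<ge> (\<Sum>i\<in>(UNIV::'m set). chat^2 * (lm * (K^2 * (\<Sum>a\<in>UNIV. (r a)^2))))"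
    by (rule sum_mono) (rule qi)
  also have "(\<Sum>i\<in>(UNIV::'m set). chat^2 * (lm * (K^2 * (\<Sum>a\<in>UNIV. (r a)^2)))) = m * (chat^2 * (lm * (K^2 * (\<Sum>a\<in>UNIV. (r a)^2))))"
    unfolding m_def by simp
  finally have S: "(\<Sum>i\<in>UNIV. (c$i)^2 * (v i \<bullet> (G *v v i))) \<ge> m * (chat^2 * (lm * (K^2 * (\<Sum>a\<in>UNIV. (r a)^2))))" .
  have "(1 / m) * (\<Sum>i\<in>UNIV. - ((c$i)^2) * (v i \<bullet> (G *v v i))) = - ((1 / m) * (\<Sum>i\<in>UNIV. (c$i)^2 * (v i \<bullet> (G *v v i))))"
    by (simp add: sum_negf)
  also have "\<dots> \<le> - ((1 / m) * (m * (chat^2 * (lm * (K^2 * (\<Sum>a\<in>UNIV. (r a)^2))))))"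
    using S mp by (simp add: pos_le_divide_eq mult.commute)
  also have "\<dots> = - 2 * chat^2 * lm * K^2 * nn_loss \<sigma> Phi c xs y W0"
    using mp unfolding loss by simp
  finally show ?thesis using lhs unfolding r_def sp_def P_def D_def m_def lm_def G_def by simp
qed

lemma h_lip:
  fixes U U' :: "real^'D::finite^'m::finite" and Phi :: "'x \<Rightarrow> real^'D"
  shows "\<bar>nn_h Phi U i x - nn_h Phi U' i x\<bar> \<le> ((1 / sqrt (real CARD('D))) * (\<Sum>j\<in>UNIV. \<bar>Phi x $ j\<bar>)) * norm (U - U')"
proof -
  have "nn_h Phi U i x - nn_h Phi U' i x = (1 / sqrt (real CARD('D))) * (\<Sum>j\<in>UNIV. (U - U')$i$j * Phi x $ j)"
    unfolding nn_h_def by (simp add: sum_subtractf right_diff_distrib left_diff_distrib)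
  also have "\<bar>\<dots>\<bar> \<le> (1 / sqrt (real CARD('D))) * (\<Sum>j\<in>UNIV. norm (U - U') * \<bar>Phi x $ j\<bar>)"
  proof -
    have "\<bar>\<Sum>j\<in>UNIV. (U - U')$i$j * Phi x $ j\<bar> \<le> (\<Sum>j\<in>UNIV. \<bar>(U - U')$i$j * Phi x $ j\<bar>)"
      by (rule sum_abs)
    also have "\<dots> \<le> (\<Sum>j\<in>UNIV. norm (U - U') * \<bar>Phi x $ j\<bar>)"
    proof (rule sum_mono)
      fix j
      have "\<bar>(U - U')$i$j\<bar> \<le> norm ((U - U')$i)" by (rule component_le_norm_cart)
      also have "\<dots> \<le> norm (U - U')" by (rule Finite_Cartesian_Product.norm_nth_le)
      finally show "\<bar>(U - U')$i$j * Phi x $ j\<bar> \<le> norm (U - U') * \<bar>Phi x $ j\<bar>"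
        by (simp add: abs_mult mult_right_mono)
    qed
    finally show ?thesis by (simp add: abs_mult divide_right_mono)
  qed
  also have "\<dots> = ((1 / sqrt (real CARD('D))) * (\<Sum>j\<in>UNIV. \<bar>Phi x $ j\<bar>)) * norm (U - U')"
    by (simp add: sum_distrib_left mult_ac)
  finally show ?thesis .
qed

lemma ac_loss:
  fixes W :: "real \<Rightarrow> real^'D::finite^'m::finite" and xs :: "'n::finite \<Rightarrow> 'x" and Phi :: "'x \<Rightarrow> real^'D"
  assumes acW: "abs_cont_on a b W" and lip: "L-lipschitz_on UNIV \<sigma>"
  shows "abs_cont_on a b (\<lambda>t. nn_loss \<sigma> Phi c xs y (W t))"
proof -
  have Lp: "L \<ge> 0" using lip by (rule lipschitz_on_nonneg)
  have h: "abs_cont_on a b (\<lambda>t. nn_h Phi (W t) i x)" for i x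
  proof (rule ac_lip[OF acW, of "(1 / sqrt (real CARD('D))) * (\<Sum>j\<in>UNIV. \<bar>Phi x $ j\<bar>)"])
    show "0 \<le> (1 / sqrt (real CARD('D))) * (\<Sum>j\<in>UNIV. \<bar>Phi x $ j\<bar>)" by (auto intro!: sum_nonneg)
    fix u v
    show "norm (nn_h Phi (W u) i x - nn_h Phi (W v) i x) \<le> (1 / sqrt (real CARD('D))) * (\<Sum>j\<in>UNIV. \<bar>Phi x $ j\<bar>) * norm (W u - W v)"
      using h_lip[of Phi "W u" i x "W v"] by (simp only: real_norm_def)
  qed
  have s: "abs_cont_on a b (\<lambda>t. \<sigma> (nn_h Phi (W t) i x))" for i x
  proof (rule ac_lip[OF h Lp])
    fix u v
    show "norm (\<sigma> (nn_h Phi (W u) i x) - \<sigma> (nn_h Phi (W v) i x)) \<le> L * norm (nn_h Phi (W u) i x - nn_h Phi (W v) i x)"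
      using lipschitz_onD[OF lip, of "nn_h Phi (W u) i x" "nn_h Phi (W v) i x"] by (simp add: dist_norm)
  qed
  have f: "abs_cont_on a b (\<lambda>t. nn_f \<sigma> Phi c (W t) x)" for x
    unfolding nn_f_def
    by (intro ac_cmul ac_sum) (auto intro: ac_cmul s)
  have fy: "abs_cont_on a b (\<lambda>t. nn_f \<sigma> Phi c (W t) x - k)" for x k
    by (rule ac_lip[OF f[of x], of 1]) auto
  show ?thesis
    unfolding nn_loss_def power2_eq_square
    by (intro ac_cmul ac_sum) (auto intro: ac_mult fy)
qed

lemma exp_diff_le:
  fixes u v :: real
  shows "\<bar>exp u - exp v\<bar> \<le> exp (max u v) * \<bar>u - v\<bar>"
proof -
  have k: "exp p - exp q \<le> exp p * (p - q)" if "q \<le> p" for p q :: real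
  proof -
    have "1 + (q - p) \<le> exp (q - p)" by (rule exp_ge_add_one_self)
    then have "exp p * (1 + (q - p)) \<le> exp p * exp (q - p)" by (simp add: mult_left_mono)
    also have "\<dots> = exp q" by (simp add: exp_diff)
    finally show ?thesis by (simp add: algebra_simps)
  qed
  show ?thesis
  proof (cases "v \<le> u")
    case True
    then show ?thesis using k[OF True] by (simp add: max_def)
  next
    case False
    then show ?thesis using k[of u v] by (simp add: max_def abs_minus_commute)
  qed
qed

lemma ac_exp: "abs_cont_on a b (\<lambda>t. exp (k * t))"
proof (rule ac_lip[OF ac_id, of "\<bar>k\<bar> * exp (\<bar>k\<bar> * (\<bar>a\<bar> + \<bar>b\<bar>))"])
  show "0 \<le> \<bar>k\<bar> * exp (\<bar>k\<bar> * (\<bar>a\<bar> + \<bar>b\<bar>))" by simp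
  fix x y assume xy: "x \<in> {a..b}" "y \<in> {a..b}"
  have bx: "k * x \<le> \<bar>k\<bar> * (\<bar>a\<bar> + \<bar>b\<bar>)" "k * y \<le> \<bar>k\<bar> * (\<bar>a\<bar> + \<bar>b\<bar>)"
  proof -
    have "\<bar>x\<bar> \<le> \<bar>a\<bar> + \<bar>b\<bar>" "\<bar>y\<bar> \<le> \<bar>a\<bar> + \<bar>b\<bar>" using xy by auto
    then have "\<bar>k\<bar> * \<bar>x\<bar> \<le> \<bar>k\<bar> * (\<bar>a\<bar> + \<bar>b\<bar>)" "\<bar>k\<bar> * \<bar>y\<bar> \<le> \<bar>k\<bar> * (\<bar>a\<bar> + \<bar>b\<bar>)"
      by (simp_all add: mult_left_mono)
    moreover have "k * x \<le> \<bar>k\<bar> * \<bar>x\<bar>" "k * y \<le> \<bar>k\<bar> * \<bar>y\<bar>"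
      by (metis abs_ge_self abs_mult)+
    ultimately show "k * x \<le> \<bar>k\<bar> * (\<bar>a\<bar> + \<bar>b\<bar>)" "k * y \<le> \<bar>k\<bar> * (\<bar>a\<bar> + \<bar>b\<bar>)" by linarith+
  qed
  have "\<bar>exp (k * x) - exp (k * y)\<bar> \<le> exp (max (k * x) (k * y)) * \<bar>k * x - k * y\<bar>"
    by (rule exp_diff_le)
  also have "\<dots> \<le> exp (\<bar>k\<bar> * (\<bar>a\<bar> + \<bar>b\<bar>)) * \<bar>k * x - k * y\<bar>"
    using bx by (intro mult_right_mono) auto
  also have "\<dots> = \<bar>k\<bar> * exp (\<bar>k\<bar> * (\<bar>a\<bar> + \<bar>b\<bar>)) * \<bar>x - y\<bar>"
    by (simp add: right_diff_distrib[symmetric] abs_mult)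
  finally show "norm (exp (k * x) - exp (k * y)) \<le> \<bar>k\<bar> * exp (\<bar>k\<bar> * (\<bar>a\<bar> + \<bar>b\<bar>)) * norm (x - y)"
    by simp
qed

theorem mainTheorem5:
  fixes \<Omega> :: "(real^'d) set"
    and xs :: "'n::finite \<Rightarrow> real^'d::finite"
    and y :: "real^'n"
    and Phi :: "real^'d \<Rightarrow> real^'D::finite"
    and \<sigma> :: "real \<Rightarrow> real"
    and c :: "real^'m::finite"
    and chat K :: real
    and W :: "real \<Rightarrow> real^'D^'m"
  assumes "\<forall>a. xs a \<in> \<Omega>"
    and "lambda_min (gram Phi xs) > 0"
    and "chat > 0" and "\<forall>i. \<bar>c$i\<bar> = chat"
    and "\<exists>L. L-lipschitz_on UNIV \<sigma>"
    and "\<forall>u. \<sigma> differentiable (at u)"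
    and "K > 0" and "\<forall>u. \<bar>deriv \<sigma> u\<bar> \<ge> K"
    and "gradient_flow_solution \<sigma> Phi c xs y W"
  shows "\<forall>t\<ge>0. nn_loss \<sigma> Phi c xs y (W t)
           \<le> nn_loss \<sigma> Phi c xs y (W 0) * exp (- 2 * chat^2 * lambda_min (gram Phi xs) * K^2 * t)"
proof (intro allI impI)
  fix T :: real assume T: "T \<ge> 0"
  define \<kappa> where "\<kappa> = 2 * chat^2 * lambda_min (gram Phi xs) * K^2"
  define Lo where "Lo s = nn_loss \<sigma> Phi c xs y (W s)" for s
  define g where "g s = Lo s * exp (\<kappa> * s)" for s
  obtain L where lip: "L-lipschitz_on UNIV \<sigma>" using assms(5) by blast
  have gf: "\<forall>T\<ge>0. abs_cont_on 0 T W"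
    "AE t in lborel. t \<ge> 0 \<longrightarrow> (W has_vector_derivative gf_rhs \<sigma> Phi c xs y (W t)) (at t)"
    using assms(9) unfolding gradient_flow_solution_def by auto
  have acg: "abs_cont_on 0 T g"
    unfolding g_def Lo_def by (rule ac_mult[OF ac_loss[OF gf(1)[rule_format, OF T] lip] ac_exp])
  from gf(2) obtain N where N: "{x \<in> space lborel. \<not> (x \<ge> 0 \<longrightarrow> (W has_vector_derivative gf_rhs \<sigma> Phi c xs y (W x)) (at x))} \<subseteq> N"
    "emeasure lborel N = 0" "N \<in> sets lborel"
    by (rule AE_E)
  have negN: "negligible N"
    unfolding negligible_iff_null_sets using N(2,3) by (intro null_sets_completionI) (simp add: null_sets_def)
  have der: "\<exists>D. (g has_real_derivative D) (at s) \<and> D \<le> 0" if s: "s \<in> {0..T}" "s \<notin> N" for s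
  proof -
    have Wd: "(W has_vector_derivative gf_rhs \<sigma> Phi c xs y (W s)) (at s)" using N(1) s by auto
    define DL where "DL = (\<Sum>a\<in>UNIV. (nn_f \<sigma> Phi c (W s) (xs a) - y$a) * ((1 / real CARD('m)) *
        (\<Sum>i\<in>UNIV. c$i * (deriv \<sigma> (nn_h Phi (W s) i (xs a)) *
           ((1 / sqrt (real CARD('D))) * (\<Sum>j\<in>UNIV. (gf_rhs \<sigma> Phi c xs y (W s))$i$j * Phi (xs a) $ j))))))"
    have dL: "(Lo has_real_derivative DL) (at s)"
      unfolding Lo_def DL_def by (rule loss_deriv[OF Wd assms(6)])
    have bL: "DL \<le> - \<kappa> * Lo s"
      unfolding DL_def Lo_def \<kappa>_def
      using deriv_bound[OF assms(2) assms(3) assms(4) assms(7) assms(8), of "W s" y] by simp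
    have dE: "((\<lambda>s. exp (\<kappa> * s)) has_real_derivative exp (\<kappa> * s) * \<kappa>) (at s)"
      using DERIV_fun_exp[OF DERIV_cmult[OF DERIV_ident, of \<kappa>]] by simp
    have dg: "(g has_real_derivative DL * exp (\<kappa> * s) + exp (\<kappa> * s) * \<kappa> * Lo s) (at s)"
      unfolding g_def by (rule DERIV_mult[OF dL dE])
    have "DL * exp (\<kappa> * s) \<le> (- \<kappa> * Lo s) * exp (\<kappa> * s)" using mult_right_mono[OF bL, of "exp (\<kappa> * s)"] by simp
    then have "DL * exp (\<kappa> * s) + exp (\<kappa> * s) * \<kappa> * Lo s \<le> 0" by (simp add: algebra_simps)
    then show ?thesis using dg by blast
  qed
  have "g T \<le> g 0" by (rule ac_nonincr[OF acg T negN der])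
  then have le: "Lo T * exp (\<kappa> * T) \<le> Lo 0" unfolding g_def by simp
  have "Lo T = (Lo T * exp (\<kappa> * T)) * exp (- (\<kappa> * T))" by (simp add: exp_minus field_simps)
  also have "\<dots> \<le> Lo 0 * exp (- (\<kappa> * T))" using le by (simp add: mult_right_mono)
  finally show "nn_loss \<sigma> Phi c xs y (W T)
           \<le> nn_loss \<sigma> Phi c xs y (W 0) * exp (- 2 * chat^2 * lambda_min (gram Phi xs) * K^2 * T)"
    unfolding Lo_def \<kappa>_def by (simp add: mult_ac)
qed

end
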